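(* Let $n\ge4$, $x_1,\dots,x_{n-1}>0$, $\gamma,\delta>0$ with $\gamma\ne1\ne\delta$, $x_0=1$, and let $\mathbf{P}$ be the $n\times n$ matrix with entries $p_{ij}=x_{j-1}/x_{i-1}$ except $p_{12}=\delta x_1$, $p_{21}=1/(\delta x_1)$, $p_{13}=\gamma x_2$, $p_{31}=1/(\gamma x_2)$. Let $\mathbf{w}^{EM}$ be the principal right eigenvector of $\mathbf{P}$. Then for $i=4,\dots,n$: $\delta>1$ iff $w_2^{EM}/w_i^{EM}<x_{i-1}/x_1$, and $\delta<1$ iff $w_2^{EM}/w_i^{EM}>x_{i-1}/x_1$.
   Context: The principal right eigenvector is the positive (Perron) eigenvector belonging to the largest eigenvalue. *)

theory Defs
  imports "Jordan_Normal_Form.Char_Poly"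
begin

text \<open>Matrices are 0-indexed: entry (i,j) here is the paper's p_{(i+1)(j+1)}.
  The paper's x_k is x k, with x 0 = 1.\<close>

definition pert_matrix :: "nat \<Rightarrow> (nat \<Rightarrow> real) \<Rightarrow> real \<Rightarrow> real \<Rightarrow> real mat" where
  "pert_matrix n x \<gamma> \<delta> = mat n n (\<lambda>(i,j).
      if (i,j) = (0,1) then \<delta> * x 1
      else if (i,j) = (1,0) then 1 / (\<delta> * x 1)
      else if (i,j) = (0,2) then \<gamma> * x 2
      else if (i,j) = (2,0) then 1 / (\<gamma> * x 2)
      else x j / x i)"

definition principal_right_eigenvector :: "real mat \<Rightarrow> real vec \<Rightarrow> bool" where
  "principal_right_eigenvector A w \<longleftrightarrow>
     (\<forall>i<dim_vec w. w $ i > 0) \<and>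
     (\<exists>lam. eigenvector A w lam \<and> (\<forall>mu. eigenvalue A mu \<longrightarrow> mu \<le> lam))"

end

theory Submission
  imports Defs
begin

theorem mainTheorem10:
  fixes n :: nat and x :: "nat \<Rightarrow> real" and \<gamma> \<delta> :: real and w :: "real vec"
  assumes "n \<ge> 4"
    and "\<forall>k\<in>{1..n-1}. x k > 0"
    and "x 0 = 1"
    and "\<gamma> > 0" and "\<delta> > 0" and "\<gamma> \<noteq> 1" and "\<delta> \<noteq> 1"
    and "principal_right_eigenvector (pert_matrix n x \<gamma> \<delta>) w"
  shows "\<forall>i\<in>{3..<n}.
           (\<delta> > 1 \<longleftrightarrow> w $ 1 / w $ i < x i / x 1) \<and>
           (\<delta> < 1 \<longleftrightarrow> w $ 1 / w $ i > x i / x 1)"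
proof
  fix i assume i: "i \<in> {3..<n}"
  define P where "P = pert_matrix n x \<gamma> \<delta>"
  have xpos: "\<And>k. k < n \<Longrightarrow> x k > 0"
  proof -
    fix k assume "k < n"
    then show "x k > 0" using assms(2,3) by (cases "k = 0") auto
  qed
  obtain lam where wpos: "\<forall>i<dim_vec w. w $ i > 0" and ev: "eigenvector P w lam"
    using assms(8) unfolding principal_right_eigenvector_def P_def by blast
  have dimP: "dim_row P = n" "dim_col P = n" unfolding P_def pert_matrix_def by auto
  have dw: "dim_vec w = n" using ev dimP unfolding eigenvector_def by auto
  have eq: "P *\<^sub>v w = lam \<cdot>\<^sub>v w" using ev unfolding eigenvector_def by auto
  have row: "(\<Sum>j<n. P $$ (k,j) * w $ j) = lam * w $ k" if "k < n" for k
  proof -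
    have "(P *\<^sub>v w) $ k = lam * w $ k" using eq that dw by simp
    moreover have "(P *\<^sub>v w) $ k = (\<Sum>j<n. P $$ (k,j) * w $ j)"
      using that dimP dw by (simp add: scalar_prod_def row_def lessThan_atLeast0)
    ultimately show ?thesis by simp
  qed
  define T where "T = (\<Sum>j<n. x j * w $ j)"
  have wp: "\<And>j. j < n \<Longrightarrow> w $ j > 0" using wpos dw by auto
  have Tpos: "T > 0" unfolding T_def
  proof (rule sum_pos)
    show "finite {..<n}" by simp
    show "{..<n} \<noteq> {}" using assms(1) by (metis lessThan_empty_iff not_numeral_le_zero)
    fix j assume "j \<in> {..<n}" then show "0 < x j * w $ j" using xpos wp by simp
  qed
  have in_: "i < n" "i \<ge> 3" using i by auto
  have rowi: "(\<Sum>j<n. P $$ (i,j) * w $ j) = T / x i"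
  proof -
    have "(\<Sum>j<n. P $$ (i,j) * w $ j) = (\<Sum>j<n. (x j * w $ j) / x i)"
      by (rule sum.cong) (use in_ in \<open>auto simp: P_def pert_matrix_def\<close>)
    also have "\<dots> = T / x i" unfolding T_def by (simp add: sum_divide_distrib)
    finally show ?thesis .
  qed
  have li: "lam * w $ i * x i = T" using row[OF in_(1)] rowi xpos[OF in_(1)] by (simp add: field_simps)
  have n1: "1 < n" using assms(1) by auto
  have row1: "(\<Sum>j<n. P $$ (1,j) * w $ j) = (T - w $ 0 + w $ 0 / \<delta>) / x 1"
  proof -
    have "(\<Sum>j<n. P $$ (1,j) * w $ j) = (\<Sum>j<n. (x j * w $ j) / x 1 + (if j = 0 then (w $ 0 / \<delta> - w $ 0) / x 1 else 0))"
      by (rule sum.cong) (use n1 assms(3) assms(5) xpos[OF n1] in \<open>auto simp: P_def pert_matrix_def field_simps\<close>)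
    also have "\<dots> = T / x 1 + (w $ 0 / \<delta> - w $ 0) / x 1"
      unfolding T_def sum.distrib using n1 by (simp add: sum_divide_distrib)
    also have "\<dots> = (T - w $ 0 + w $ 0 / \<delta>) / x 1" by (simp add: add_divide_distrib diff_divide_distrib)
    finally show ?thesis .
  qed
  have l1: "lam * w $ 1 * x 1 = T - w $ 0 + w $ 0 / \<delta>"
    using row[OF n1] row1 xpos[OF n1] by (simp add: field_simps)
  have lampos: "lam > 0"
  proof -
    have "0 < lam * (w $ i * x i)" using li Tpos by (simp add: mult.assoc)
    moreover have "w $ i * x i > 0" using wp xpos in_ by simp
    ultimately show ?thesis by (simp add: zero_less_mult_iff)
  qed
  have key: "lam * (w $ 1 * x 1 - w $ i * x i) = w $ 0 * (1/\<delta> - 1)"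
    using li l1 by (simp add: algebra_simps)
  have w0: "w $ 0 > 0" using wp assms(1) by simp
  have w1: "w $ 1 > 0" "w $ i > 0" "x 1 > 0" "x i > 0" using wp xpos n1 in_ by auto
  have cmp: "(w $ 1 / w $ i < x i / x 1) = (w $ 1 * x 1 < w $ i * x i)"
    "(w $ 1 / w $ i > x i / x 1) = (w $ 1 * x 1 > w $ i * x i)"
    using w1 by (simp_all add: divide_simps mult.commute)
  have A: "\<delta> > 1 \<Longrightarrow> w $ 1 * x 1 < w $ i * x i"
  proof -
    assume d: "\<delta> > 1"
    have "1/\<delta> < 1" using d by simp
    then have "w $ 0 * (1/\<delta> - 1) < 0" using w0 by (simp add: mult_pos_neg)
    then have "lam * (w $ 1 * x 1 - w $ i * x i) < 0" using key by simp
    then show ?thesis using lampos by (simp add: mult_less_0_iff)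
  qed
  have B: "\<delta> < 1 \<Longrightarrow> w $ 1 * x 1 > w $ i * x i"
  proof -
    assume d: "\<delta> < 1"
    have "1/\<delta> > 1" using d assms(5) by simp
    then have "w $ 0 * (1/\<delta> - 1) > 0" using w0 by simp
    then have "lam * (w $ 1 * x 1 - w $ i * x i) > 0" using key by simp
    then show ?thesis using lampos by (simp add: zero_less_mult_iff)
  qed
  show "(\<delta> > 1 \<longleftrightarrow> w $ 1 / w $ i < x i / x 1) \<and> (\<delta> < 1 \<longleftrightarrow> w $ 1 / w $ i > x i / x 1)"
    unfolding cmp using A B assms(7) by (meson linorder_neqE_linordered_idom not_less_iff_gr_or_eq)
qed

end
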